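(* Let $\alpha,\beta\in[0,1)$ and let $\lambda$ be a zero of $\mathcal D(\beta,\cdot)$. Set $\mathcal H(\alpha,\beta,x)=A(\alpha,\beta,\lambda)-A(\alpha,\beta,x)+64\mathcal D(\beta,x)(1-x)$. Then $\lambda$ is a multiple zero of $\mathcal H(\alpha,\beta,\cdot)$ if and only if $$8(\lambda-1)\Big(1-2\big(\lambda^2-2\lambda(3-\lambda)+\tfrac{45}{16}\big)\Big)=\cos(2\pi\alpha).$$
   Context: $A(\alpha,\beta,\lambda)=16\lambda^2-(32+4\cos2\pi\alpha)\lambda+15+4\cos2\pi\alpha+\cos(2\pi(\alpha+\beta))$; $\mathcal D(\beta,\lambda)=-\lambda^3+3\lambda^2-\frac{45}{16}\lambda+\frac{13}{16}-\frac1{32}\cos(2\pi\beta)$. *)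

theory Defs
  imports Complex_Main "HOL-Computational_Algebra.Polynomial"
begin

definition A :: "real \<Rightarrow> real \<Rightarrow> real \<Rightarrow> real" where
  "A \<alpha> \<beta> lam = 16 * lam^2 - (32 + 4 * cos (2*pi*\<alpha>)) * lam + 15 + 4 * cos (2*pi*\<alpha>)
      + cos (2*pi*(\<alpha>+\<beta>))"

definition D :: "real \<Rightarrow> real \<Rightarrow> real" where
  "D \<beta> lam = - (lam^3) + 3 * lam^2 - 45/16 * lam + 13/16 - 1/32 * cos (2*pi*\<beta>)"

definition A_poly :: "real \<Rightarrow> real \<Rightarrow> real poly" where
  "A_poly \<alpha> \<beta> = [: 15 + 4 * cos (2*pi*\<alpha>) + cos (2*pi*(\<alpha>+\<beta>)), - (32 + 4 * cos (2*pi*\<alpha>)), 16 :]"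

definition D_poly :: "real \<Rightarrow> real poly" where
  "D_poly \<beta> = [: 13/16 - 1/32 * cos (2*pi*\<beta>), -45/16, 3, -1 :]"

definition H_poly :: "real \<Rightarrow> real \<Rightarrow> real \<Rightarrow> real poly" where
  "H_poly \<alpha> \<beta> lam = [: A \<alpha> \<beta> lam :] - A_poly \<alpha> \<beta> + smult 64 (D_poly \<beta> * [: 1, -1 :])"

lemma poly_A_poly: "poly (A_poly \<alpha> \<beta>) x = A \<alpha> \<beta> x"
  by (simp add: A_poly_def A_def power2_eq_square algebra_simps)

lemma poly_D_poly: "poly (D_poly \<beta>) x = D \<beta> x"
  by (simp add: D_poly_def D_def power2_eq_square power3_eq_cube algebra_simps)

lemma poly_H_poly:
  "poly (H_poly \<alpha> \<beta> lam) x = A \<alpha> \<beta> lam - A \<alpha> \<beta> x + 64 * D \<beta> x * (1 - x)"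
  by (simp add: H_poly_def poly_A_poly poly_D_poly algebra_simps)

end

theory Submission
  imports Defs
begin

lemma H_coeff4: "coeff (H_poly a b l) 4 = 64"
  by (simp add: H_poly_def A_poly_def D_poly_def coeff_mult numeral_eq_Suc)

lemma H_nz: "H_poly a b l \<noteq> 0"
  using H_coeff4[of a b l] by auto

lemma H_pderiv_nz: "pderiv (H_poly a b l) \<noteq> 0"
proof
  assume "pderiv (H_poly a b l) = 0"
  then have "degree (H_poly a b l) = 0" by (simp add: pderiv_eq_0_iff)
  then have "coeff (H_poly a b l) 4 = 0" by (simp add: coeff_eq_0)
  then show False using H_coeff4[of a b l] by simp
qed

lemma H_deriv:
  "poly (pderiv (H_poly a b l)) x =
     -(32 * x - 32 - 4 * cos (2*pi*a)) + 64 * (-3*x^2 + 6*x - 45/16) * (1 - x) - 64 * D b x"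
proof -
  have d1: "DERIV (poly (H_poly a b l)) x :> poly (pderiv (H_poly a b l)) x"
    by (rule poly_DERIV)
  have eq: "poly (H_poly a b l) = (\<lambda>x. A a b l - A a b x + 64 * D b x * (1 - x))"
    by (rule ext) (simp add: poly_H_poly)
  have d2: "DERIV (\<lambda>x. A a b l - A a b x + 64 * D b x * (1 - x)) x :>
     -(32 * x - 32 - 4 * cos (2*pi*a)) + 64 * (-3*x^2 + 6*x - 45/16) * (1 - x) - 64 * D b x"
    unfolding A_def D_def
    by (auto intro!: derivative_eq_intros simp: algebra_simps power2_eq_square)
  show ?thesis using DERIV_unique[OF d1[unfolded eq] d2] .
qed

theorem lemma4p6:
  fixes \<alpha> \<beta> lam :: real
  assumes "0 \<le> \<alpha>" "\<alpha> < 1" "0 \<le> \<beta>" "\<beta> < 1"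
    and "D \<beta> lam = 0"
  shows "order lam (H_poly \<alpha> \<beta> lam) \<ge> 2 \<longleftrightarrow>
         8 * (lam - 1) * (1 - 2 * (lam^2 - 2 * lam * (3 - lam) + 45/16)) = cos (2*pi*\<alpha>)"
proof -
  let ?H = "H_poly \<alpha> \<beta> lam"
  have r: "poly ?H lam = 0" using assms(5) by (simp add: poly_H_poly)
  have o: "order lam ?H \<noteq> 0" using r H_nz order_root by blast
  have eq: "order lam ?H = Suc (order lam (pderiv ?H))"
    using order_pderiv[OF H_nz r] .
  have "order lam ?H \<ge> 2 \<longleftrightarrow> order lam (pderiv ?H) \<noteq> 0" using eq by auto
  also have "\<dots> \<longleftrightarrow> poly (pderiv ?H) lam = 0" using order_root H_pderiv_nz by blast
  also have "\<dots> \<longleftrightarrow> 8 * (lam - 1) * (1 - 2 * (lam^2 - 2 * lam * (3 - lam) + 45/16)) = cos (2*pi*\<alpha>)"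
    unfolding H_deriv assms(5) by (simp add: field_simps power2_eq_square power3_eq_cube) linarith
  finally show ?thesis .
qed

end
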